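(* Let $\Sigma$ be a topological Markov chain with shift $\sigma$ and $\mu$ a Gibbs measure on $\Sigma$ for a H\"older continuous potential (as in the context), and let $\varepsilon>0$. Then there exists a sequence of cylinders $\{C_n\}$, $C_n$ defined on an interval $\Lambda_n\subset\mathbb Z$, with $\sum_n\mu(C_n)=\infty$, such that the center of each $\Lambda_n$ lies in $[-\varepsilon|\Lambda_n|/2,\varepsilon|\Lambda_n|/2]$, and such that for $\mu$-a.e. $\underline\omega\in\Sigma$ there are only finitely many $n$ with $\sigma^n\underline\omega\in C_n$ (in particular $\{C_n\}$ is not a Borel-Cantelli sequence). The same holds with the centering condition replaced by: the left endpoint of each $\Lambda_n$ lies in $[0,\varepsilon|\Lambda_n|]$.
   Context: Let $M\ge2$ and $\mathbf A$ an $M\times M$ zero-one matrix with $\mathbf A^K$ entrywise positive for some $K\ge1$; $\Sigma=\{\underline\omega\in\{1,\dots,M\}^{\mathbb Z}:\mathbf A_{\omega_i\omega_{i+1}}=1\ \forall i\}$ with product topology and left shift $(\sigma\underline\omega)_i=\omega_{i+1}$; $\mu$ is the unique $\sigma$-invariant Gibbs measure of a H\"older continuous function on $\Sigma$. A cylinder defined on $\Lambda=[n^-,n^+]\subset\mathbb Z$ is $\{\underline\omega'\in\Sigma:\omega_i'=\omega_i,\ n^-\le i\le n^+\}$ for fixed symbols $\omega_i$; $|\Lambda|=n^+-n^-+1$, and the center of $\Lambda$ is $(n^-+n^+)/2$. A sequence of sets $\{A_n\}$ with $\sum\mu(A_n)=\infty$ is a Borel-Cantelli sequence if for $\mu$-a.e.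 $\underline\omega$ there are infinitely many $n$ with $\sigma^n\underline\omega\in A_n$. *)

theory Defs
  imports "HOL-Probability.Probability"
begin

text \<open>Symbols are 1..M; a zero-one matrix is a function nat => nat => nat.
  Sequences are functions int => nat, with the product topology (nat discrete).\<close>

definition zero_one_matrix :: "nat \<Rightarrow> (nat \<Rightarrow> nat \<Rightarrow> nat) \<Rightarrow> bool" where
  "zero_one_matrix M A \<longleftrightarrow> (\<forall>i\<in>{1..M}. \<forall>j\<in>{1..M}. A i j = 0 \<or> A i j = 1)"

fun mat_pow :: "nat \<Rightarrow> (nat \<Rightarrow> nat \<Rightarrow> nat) \<Rightarrow> nat \<Rightarrow> nat \<Rightarrow> nat \<Rightarrow> nat" where
  "mat_pow M A 0 i j = (if i = j then 1 else 0)"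
| "mat_pow M A (Suc k) i j = (\<Sum>l\<in>{1..M}. mat_pow M A k i l * A l j)"

definition TMC :: "nat \<Rightarrow> (nat \<Rightarrow> nat \<Rightarrow> nat) \<Rightarrow> (int \<Rightarrow> nat) set" where
  "TMC M A = {\<omega>. (\<forall>i. \<omega> i \<in> {1..M}) \<and> (\<forall>i. A (\<omega> i) (\<omega> (i + 1)) = 1)}"

definition shift :: "(int \<Rightarrow> nat) \<Rightarrow> (int \<Rightarrow> nat)" where
  "shift \<omega> = (\<lambda>i. \<omega> (i + 1))"

definition cyl :: "nat \<Rightarrow> (nat \<Rightarrow> nat \<Rightarrow> nat) \<Rightarrow> int \<Rightarrow> int \<Rightarrow> (int \<Rightarrow> nat) \<Rightarrow> (int \<Rightarrow> nat) set" where
  "cyl M A a b w = {\<omega> \<in> TMC M A. \<forall>i\<in>{a..b}. \<omega> i = w i}"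

text \<open>Hoelder continuity w.r.t. the metric d(x,y) = theta^(min{|i| : x_i /= y_i}).\<close>
definition holder :: "nat \<Rightarrow> (nat \<Rightarrow> nat \<Rightarrow> nat) \<Rightarrow> ((int \<Rightarrow> nat) \<Rightarrow> real) \<Rightarrow> bool" where
  "holder M A \<phi> \<longleftrightarrow> (\<exists>c \<theta>. 0 < \<theta> \<and> \<theta> < 1 \<and>
     (\<forall>x\<in>TMC M A. \<forall>y\<in>TMC M A. \<forall>n::nat.
        (\<forall>i::int. \<bar>i\<bar> < int n \<longrightarrow> x i = y i) \<longrightarrow> \<bar>\<phi> x - \<phi> y\<bar> \<le> c * \<theta> ^ n))"

definition birkhoff_sum :: "((int \<Rightarrow> nat) \<Rightarrow> real) \<Rightarrow> nat \<Rightarrow> (int \<Rightarrow> nat) \<Rightarrow> real" where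
  "birkhoff_sum \<phi> n \<omega> = (\<Sum>k<n. \<phi> ((shift ^^ k) \<omega>))"

definition gibbs :: "nat \<Rightarrow> (nat \<Rightarrow> nat \<Rightarrow> nat) \<Rightarrow> ((int \<Rightarrow> nat) \<Rightarrow> real) \<Rightarrow> (int \<Rightarrow> nat) measure \<Rightarrow> bool" where
  "gibbs M A \<phi> \<mu> \<longleftrightarrow> (\<exists>C P. C > 0 \<and> (\<forall>\<omega>\<in>TMC M A. \<forall>n::nat. n \<ge> 1 \<longrightarrow>
      exp (- real n * P + birkhoff_sum \<phi> n \<omega>) / C \<le> measure \<mu> (cyl M A 0 (int n - 1) \<omega>) \<and>
      measure \<mu> (cyl M A 0 (int n - 1) \<omega>) \<le> C * exp (- real n * P + birkhoff_sum \<phi> n \<omega>)))"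

end

theory Submission
  imports Defs
begin



lemma open_coord: "open {\<omega>::int\<Rightarrow>nat. P (\<omega> i)}"
proof -
  have e: "{\<omega>::int\<Rightarrow>nat. P (\<omega> i)} = (\<lambda>x. x i) -` {c. P c} \<inter> UNIV" by auto
  have c0: "continuous_on UNIV (\<lambda>x::int\<Rightarrow>nat. x i)" by (rule continuous_on_product_coordinates)
  have c: "\<forall>B. open B \<longrightarrow> open ((\<lambda>x::int\<Rightarrow>nat. x i) -` B \<inter> UNIV)"
    using iffD1[OF continuous_on_open_vimage[OF open_UNIV] c0] .
  have o: "open {c::nat. P c}" by (rule Topological_Spaces.open_discrete)
  show ?thesis unfolding e by (rule c[rule_format, OF o])
qed

lemma open_coord2: "open {\<omega>::int\<Rightarrow>nat. P (\<omega> i) (\<omega> j)}"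
proof -
  have e: "{\<omega>::int\<Rightarrow>nat. P (\<omega> i) (\<omega> j)} = (\<Union>c. {\<omega>. \<omega> i = c} \<inter> {\<omega>. P c (\<omega> j)})" by auto
  have "\<And>c. open ({\<omega>::int\<Rightarrow>nat. \<omega> i = c} \<inter> {\<omega>. P c (\<omega> j)})"
    by (intro open_Int open_coord)
  then show ?thesis unfolding e by (intro open_UN) blast
qed

lemma TMC_borel: "TMC M A \<in> sets borel"
proof -
  have "TMC M A = (\<Inter>i. {\<omega>. \<omega> i \<in> {1..M}}) \<inter> (\<Inter>i. {\<omega>. A (\<omega> i) (\<omega> (i+1)) = 1})"
    unfolding TMC_def by auto
  moreover have "(\<Inter>i. {\<omega>::int\<Rightarrow>nat. \<omega> i \<in> {1..M}}) \<in> sets borel"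
    using open_coord by (intro sets.countable_INT') auto
  moreover have "(\<Inter>i. {\<omega>::int\<Rightarrow>nat. A (\<omega> i) (\<omega> (i+1)) = 1}) \<in> sets borel"
    using open_coord2 by (intro sets.countable_INT') auto
  ultimately show ?thesis by auto
qed

lemma cyl_borel: "cyl M A a b w \<in> sets borel"
proof -
  have "cyl M A a b w = TMC M A \<inter> (\<Inter>i\<in>{a..b}. {\<omega>. \<omega> i = w i})"
    unfolding cyl_def by auto
  moreover have "(\<Inter>i\<in>{a..b}. {\<omega>::int\<Rightarrow>nat. \<omega> i = w i}) \<in> sets borel"
    using open_coord by (intro sets.countable_INT'') auto
  ultimately show ?thesis using TMC_borel by auto
qed

lemma funpow_shift: "(shift ^^ n) \<omega> = (\<lambda>i. \<omega> (i + int n))"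
  by (induction n arbitrary: \<omega>) (auto simp: shift_def algebra_simps)

lemma TMC_trans: "(\<lambda>i. \<omega> (i + t)) \<in> TMC M A \<longleftrightarrow> \<omega> \<in> TMC M A"
proof
  assume h: "(\<lambda>i. \<omega> (i + t)) \<in> TMC M A"
  show "\<omega> \<in> TMC M A" unfolding TMC_def
  proof (intro CollectI conjI allI)
    fix i
    have h1: "\<forall>i. \<omega> (i + t) \<in> {1..M}" and h2: "\<forall>i. A (\<omega> (i + t)) (\<omega> (i + 1 + t)) = 1"
      using h unfolding TMC_def by auto
    have "\<omega> (i - t + t) \<in> {1..M}" using h1 by blast
    then show "\<omega> i \<in> {1..M}" by simp
    have "A (\<omega> (i - t + t)) (\<omega> (i - t + 1 + t)) = 1" using h2 by blast
    moreover have "i - t + 1 + t = i + 1" by simp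
    ultimately show "A (\<omega> i) (\<omega> (i + 1)) = 1" by simp
  qed
next
  assume h: "\<omega> \<in> TMC M A"
  show "(\<lambda>i. \<omega> (i + t)) \<in> TMC M A" unfolding TMC_def
  proof (intro CollectI conjI allI)
    fix i
    show "\<omega> (i + t) \<in> {1..M}" using h unfolding TMC_def by blast
    have "A (\<omega> (i + t)) (\<omega> (i + t + 1)) = 1" using h unfolding TMC_def by blast
    moreover have "i + t + 1 = i + 1 + t" by simp
    ultimately show "A (\<omega> (i + t)) (\<omega> (i + 1 + t)) = 1" by simp
  qed
qed

lemma hit_iff: "(shift ^^ n) \<omega> \<in> cyl M A a b w \<longleftrightarrow>
   \<omega> \<in> cyl M A (a + int n) (b + int n) (\<lambda>j. w (j - int n))"
proof -
  have "(\<forall>i\<in>{a..b}. \<omega> (i + int n) = w i) \<longleftrightarrow> (\<forall>j\<in>{a + int n..b + int n}. \<omega> j = w (j - int n))"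
  proof
    assume L: "\<forall>i\<in>{a..b}. \<omega> (i + int n) = w i"
    show "\<forall>j\<in>{a + int n..b + int n}. \<omega> j = w (j - int n)"
    proof
      fix j assume "j \<in> {a + int n..b + int n}"
      then have "j - int n \<in> {a..b}" by auto
      then have "\<omega> (j - int n + int n) = w (j - int n)" using L by blast
      then show "\<omega> j = w (j - int n)" by simp
    qed
  next
    assume R: "\<forall>j\<in>{a + int n..b + int n}. \<omega> j = w (j - int n)"
    show "\<forall>i\<in>{a..b}. \<omega> (i + int n) = w i"
    proof
      fix i assume "i \<in> {a..b}"
      then have "i + int n \<in> {a + int n..b + int n}" by auto
      then show "\<omega> (i + int n) = w i" using R by fastforce
    qed
  qed
  then show ?thesis unfolding cyl_def funpow_shift using TMC_trans by auto
qed

locale inv_setup =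
  fixes M :: nat and A :: "nat \<Rightarrow> nat \<Rightarrow> nat" and \<mu> :: "(int \<Rightarrow> nat) measure"
  assumes sets_mu: "sets \<mu> = sets borel"
    and distr_mu: "distr \<mu> \<mu> shift = \<mu>"
    and shift_meas: "shift \<in> measurable \<mu> \<mu>"
begin

lemma space_mu: "space \<mu> = UNIV"
  using sets_eq_imp_space_eq[OF sets_mu] by simp

lemma cyl_sets[measurable]: "cyl M A a b w \<in> sets \<mu>"
  using cyl_borel sets_mu by auto

lemma cyl_inv1: "emeasure \<mu> (cyl M A (a+1) (b+1) (\<lambda>j. w (j-1))) = emeasure \<mu> (cyl M A a b w)"
proof -
  have "shift -` cyl M A a b w = cyl M A (a+1) (b+1) (\<lambda>j. w (j-1))"
    using hit_iff[of 1 _ M A a b w] by auto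
  have "emeasure \<mu> (cyl M A a b w) = emeasure (distr \<mu> \<mu> shift) (cyl M A a b w)"
    using distr_mu by simp
  also have "\<dots> = emeasure \<mu> (shift -` cyl M A a b w \<inter> space \<mu>)"
    by (rule emeasure_distr[OF shift_meas cyl_sets])
  also have "\<dots> = emeasure \<mu> (cyl M A (a+1) (b+1) (\<lambda>j. w (j-1)))"
    using \<open>shift -` cyl M A a b w = _\<close> space_mu by simp
  finally show ?thesis by simp
qed

lemma cyl_inv_nat: "emeasure \<mu> (cyl M A (a+int n) (b+int n) (\<lambda>j. w (j - int n))) = emeasure \<mu> (cyl M A a b w)"
proof (induction n arbitrary: a b w)
  case 0
  then show ?case by simp
next
  case (Suc n)
  have e: "(\<lambda>j. (\<lambda>j. w (j - int n)) (j - 1)) = (\<lambda>j. w (j - int (Suc n)))" by (auto simp: algebra_simps)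
  have "emeasure \<mu> (cyl M A (a+int (Suc n)) (b+int (Suc n)) (\<lambda>j. w (j - int (Suc n))))
     = emeasure \<mu> (cyl M A ((a+int n)+1) ((b+int n)+1) (\<lambda>j. (\<lambda>j. w (j - int n)) (j - 1)))"
    using e by (simp add: algebra_simps)
  also have "\<dots> = emeasure \<mu> (cyl M A (a+int n) (b+int n) (\<lambda>j. w (j - int n)))" by (rule cyl_inv1)
  finally show ?case using Suc by simp
qed

lemma cyl_inv: "emeasure \<mu> (cyl M A (a+t) (b+t) (\<lambda>j. w (j - t))) = emeasure \<mu> (cyl M A a b w)"
proof (cases "t \<ge> 0")
  case True
  then obtain n where "t = int n" by (metis nonneg_eq_int)
  then show ?thesis using cyl_inv_nat by simp
next
  case False
  define n where "n = nat (- t)"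
  have t: "t = - int n" using False unfolding n_def by simp
  have "emeasure \<mu> (cyl M A a b w) = emeasure \<mu> (cyl M A ((a+t)+int n) ((b+t)+int n) (\<lambda>j. (\<lambda>j. w (j - t)) (j - int n)))"
    using t by simp
  also have "\<dots> = emeasure \<mu> (cyl M A (a+t) (b+t) (\<lambda>j. w (j - t)))" by (rule cyl_inv_nat)
  finally show ?thesis by simp
qed

end




lemma path_exists:
  assumes zo: "zero_one_matrix M A" and i: "i \<in> {1..M}"
  shows "j \<in> {1..M} \<Longrightarrow> mat_pow M A k i j > 0 \<Longrightarrow>
    \<exists>p. p 0 = i \<and> p k = j \<and> (\<forall>t\<le>k. p t \<in> {1..M}) \<and> (\<forall>t<k. A (p t) (p (Suc t)) = 1)"
proof (induction k arbitrary: j)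
  case 0
  then have "i = j" by (auto split: if_splits)
  then show ?case using i by (intro exI[of _ "\<lambda>_. i"]) auto
next
  case (Suc k)
  have "0 < (\<Sum>l\<in>{1..M}. mat_pow M A k i l * A l j)" using Suc.prems by simp
  then obtain l where l: "l \<in> {1..M}" "mat_pow M A k i l * A l j > 0"
    by (metis (no_types, lifting) not_gr0 sum.neutral)
  then have m: "mat_pow M A k i l > 0" and "A l j \<noteq> 0" by auto
  have "A l j = 0 \<or> A l j = 1" using zo l(1) Suc.prems(1) unfolding zero_one_matrix_def by blast
  then have Alj: "A l j = 1" using \<open>A l j \<noteq> 0\<close> by simp
  obtain p where p: "p 0 = i" "p k = l" "\<forall>t\<le>k. p t \<in> {1..M}" "\<forall>t<k. A (p t) (p (Suc t)) = 1"
    using Suc.IH[OF l(1) m] by blast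
  show ?case
  proof (intro exI[of _ "p(Suc k := j)"] conjI allI impI)
    show "(p(Suc k := j)) 0 = i" using p by simp
    show "(p(Suc k := j)) (Suc k) = j" by simp
    fix t
    show "t \<le> Suc k \<Longrightarrow> (p(Suc k := j)) t \<in> {1..M}" using p(3) Suc.prems(1)
      by (cases "t = Suc k") auto
    show "t < Suc k \<Longrightarrow> A ((p(Suc k := j)) t) ((p(Suc k := j)) (Suc t)) = 1"
      using p Alj by (cases "t = k") auto
  qed
qed

definition loopc :: "nat \<Rightarrow> (nat \<Rightarrow> nat) \<Rightarrow> (nat \<Rightarrow> nat) \<Rightarrow> nat \<Rightarrow> nat" where
  "loopc K p q t = (if t \<le> K then p t else q (t - K))"

lemma loopc_props:
  assumes "p 0 = x" "p K = y" "\<forall>t\<le>K. p t \<in> {1..M}" "\<forall>t<K. A (p t) (p (Suc t)) = 1"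
    and "q 0 = y" "q K = z" "\<forall>t\<le>K. q t \<in> {1..M}" "\<forall>t<K. A (q t) (q (Suc t)) = 1"
  shows "loopc K p q 0 = x" "loopc K p q (2*K) = z" "loopc K p q K = y"
    "\<forall>t\<le>2*K. loopc K p q t \<in> {1..M}" "\<forall>t<2*K. A (loopc K p q t) (loopc K p q (Suc t)) = 1"
proof -
  show "loopc K p q 0 = x" "loopc K p q K = y" using assms unfolding loopc_def by auto
  show "loopc K p q (2*K) = z" using assms unfolding loopc_def by (cases "K = 0") auto
  show "\<forall>t\<le>2*K. loopc K p q t \<in> {1..M}" using assms unfolding loopc_def by auto
  show "\<forall>t<2*K. A (loopc K p q t) (loopc K p q (Suc t)) = 1"
  proof (intro allI impI)
    fix t assume t: "t < 2*K"
    show "A (loopc K p q t) (loopc K p q (Suc t)) = 1"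
    proof (cases "t < K")
      case True then show ?thesis using assms unfolding loopc_def by auto
    next
      case False
      then have "Suc t - K = Suc (t - K)" "t - K < K" using t by auto
      then show ?thesis using assms False unfolding loopc_def
        by (cases "t = K") auto
    qed
  qed
qed




definition pt :: "nat \<Rightarrow> (nat \<Rightarrow> nat) \<Rightarrow> (nat \<Rightarrow> nat) \<Rightarrow> (int \<Rightarrow> bool) \<Rightarrow> int \<Rightarrow> nat" where
  "pt L la lb c i = (if c (i div int L) then lb else la) (nat (i mod int L))"

lemma divmod_step:
  fixes i :: int and L :: int
  assumes L0: "L > 0"
  shows "i mod L + 1 < L \<Longrightarrow> (i+1) div L = i div L \<and> (i+1) mod L = i mod L + 1"
    and "i mod L + 1 = L \<Longrightarrow> (i+1) div L = i div L + 1 \<and> (i+1) mod L = 0"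
proof -
  have m: "i mod L + L * (i div L) = i" by (rule mod_mult_div_eq)
  have e: "i + 1 = (i mod L + 1) + L * (i div L)" using m by linarith
  have d0: "((i mod L + 1) + L * (i div L)) div L = i div L + (i mod L + 1) div L"
    using div_mult_self2[of L "i mod L + 1" "i div L"] L0 by (simp only: add.commute)
  have d: "(i+1) div L = i div L + (i mod L + 1) div L"
    by (subst e, rule d0)
  have md0: "((i mod L + 1) + L * (i div L)) mod L = (i mod L + 1) mod L"
    by (rule mod_mult_self2)
  have md: "(i+1) mod L = (i mod L + 1) mod L"
    by (subst e, rule md0)
  have nn: "0 \<le> i mod L + 1" using L0 by simp
  {
    assume h: "i mod L + 1 < L"
    show "(i+1) div L = i div L \<and> (i+1) mod L = i mod L + 1"
      using d md nn h by simp
  }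
  {
    assume h: "i mod L + 1 = L"
    show "(i+1) div L = i div L + 1 \<and> (i+1) mod L = 0"
      using d md h L0 by simp
  }
qed

lemma pt_TMC:
  assumes L: "L > 0"
    and la: "la 0 = 1" "la L = 1" "\<forall>t\<le>L. la t \<in> {1..M}" "\<forall>t<L. A (la t) (la (Suc t)) = 1"
    and lb: "lb 0 = 1" "lb L = 1" "\<forall>t\<le>L. lb t \<in> {1..M}" "\<forall>t<L. A (lb t) (lb (Suc t)) = 1"
  shows "pt L la lb c \<in> TMC M A"
  unfolding TMC_def
proof (intro CollectI conjI allI)
  fix i :: int
  have m: "0 \<le> i mod int L" "i mod int L < int L" using L by auto
  then have n: "nat (i mod int L) < L" by auto
  show "pt L la lb c i \<in> {1..M}" unfolding pt_def using la lb n by auto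
  show "A (pt L la lb c i) (pt L la lb c (i + 1)) = 1"
  proof (cases "i mod int L + 1 < int L")
    case True
    then have d: "(i+1) div int L = i div int L" "(i+1) mod int L = i mod int L + 1"
      using divmod_step(1)[of "int L" i] L by auto
    have "nat ((i+1) mod int L) = Suc (nat (i mod int L))" using d m by simp
    then show ?thesis unfolding pt_def using d(1) la lb n by auto
  next
    case False
    then have e: "i mod int L + 1 = int L" using m by simp
    then have d: "(i+1) div int L = i div int L + 1" "(i+1) mod int L = 0"
      using divmod_step(2)[of "int L" i] L by auto
    have s: "Suc (nat (i mod int L)) = L" using e m by simp
    have "A (la (nat (i mod int L))) 1 = 1" "A (lb (nat (i mod int L))) 1 = 1"
    proof -
      have "A (la (nat (i mod int L))) (la (Suc (nat (i mod int L)))) = 1"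
           "A (lb (nat (i mod int L))) (lb (Suc (nat (i mod int L)))) = 1"
        using la(4) lb(4) n by auto
      then show "A (la (nat (i mod int L))) 1 = 1" "A (lb (nat (i mod int L))) 1 = 1"
        unfolding s using la(2) lb(2) by auto
    qed
    then show ?thesis unfolding pt_def using d la(1) lb(1) by auto
  qed
qed

lemma pt_at:
  assumes "L > 0" "t < L"
  shows "pt L la lb c (int L * m + int t) = (if c m then lb t else la t)"
proof -
  have "(int L * m + int t) div int L = m" "(int L * m + int t) mod int L = int t"
    using assms by auto
  then show ?thesis unfolding pt_def by simp
qed




locale setup2 = inv_setup +
  fixes K :: nat and \<phi> :: "(int \<Rightarrow> nat) \<Rightarrow> real"
  assumes prob: "prob_space \<mu>" and zo: "zero_one_matrix M A" and M2: "M \<ge> 2" and K1: "K \<ge> 1"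
    and mp: "\<forall>i\<in>{1..M}. \<forall>j\<in>{1..M}. mat_pow M A K i j > 0"
    and gb: "gibbs M A \<phi> \<mu>"
begin

lemma loops_exist:
  "\<exists>la lb. la 0 = 1 \<and> la (2*K) = 1 \<and> (\<forall>t\<le>2*K. la t \<in> {1..M}) \<and> (\<forall>t<2*K. A (la t) (la (Suc t)) = 1)
     \<and> lb 0 = 1 \<and> lb (2*K) = 1 \<and> (\<forall>t\<le>2*K. lb t \<in> {1..M}) \<and> (\<forall>t<2*K. A (lb t) (lb (Suc t)) = 1)
     \<and> la K = 1 \<and> lb K = 2"
proof -
  have i1: "(1::nat) \<in> {1..M}" and i2: "(2::nat) \<in> {1..M}" using M2 by auto
  obtain a where a: "a 0 = 1" "a K = 1" "\<forall>t\<le>K. a t \<in> {1..M}" "\<forall>t<K. A (a t) (a (Suc t)) = 1"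
    using path_exists[OF zo i1 i1] mp i1 by blast
  obtain g where g: "g 0 = 1" "g K = 2" "\<forall>t\<le>K. g t \<in> {1..M}" "\<forall>t<K. A (g t) (g (Suc t)) = 1"
    using path_exists[OF zo i1 i2] mp i1 i2 by blast
  obtain d where d: "d 0 = 2" "d K = 1" "\<forall>t\<le>K. d t \<in> {1..M}" "\<forall>t<K. A (d t) (d (Suc t)) = 1"
    using path_exists[OF zo i2 i1] mp i1 i2 by blast
  note A = loopc_props[OF a a] and B = loopc_props[OF g d]
  show ?thesis
    apply (rule exI[of _ "loopc K a a"])
    apply (rule exI[of _ "loopc K g d"])
    using A B by simp
qed

lemma small_cyl:
  assumes q: "q > 0"
  shows "\<exists>\<omega>\<in>TMC M A. \<exists>E::nat. measure \<mu> (cyl M A 0 (int E) \<omega>) \<le> q"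
proof -
  obtain la lb where l: "la 0 = 1" "la (2*K) = 1" "\<forall>t\<le>2*K. la t \<in> {1..M}" "\<forall>t<2*K. A (la t) (la (Suc t)) = 1"
     "lb 0 = 1" "lb (2*K) = 1" "\<forall>t\<le>2*K. lb t \<in> {1..M}" "\<forall>t<2*K. A (lb t) (lb (Suc t)) = 1"
     "la K = 1" "lb K = 2"
    using loops_exist by blast
  define L where "L = 2*K"
  have L0: "L > 0" using K1 L_def by simp
  define N where "N = nat \<lceil>1/q\<rceil>"
  define P where "P m = pt L la lb (\<lambda>x. x = int m)" for m :: nat
  define E where "E = L * (N+1)"
  define Z where "Z m = cyl M A 0 (int E) (P m)" for m
  have PT: "P m \<in> TMC M A" for m unfolding P_def using pt_TMC[OF L0] l unfolding L_def by blast
  have KL: "K < L" using K1 L_def by simp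
  have Pat: "P m (int L * int m' + int K) = (if m' = m then 2 else 1)" for m m'
    unfolding P_def using pt_at[OF L0 KL] l by auto
  have disj: "disjoint_family_on Z {..N}"
    unfolding disjoint_family_on_def
  proof (intro ballI impI)
    fix m m' assume mm: "m \<in> {..N}" "m' \<in> {..N}" "m \<noteq> m'"
    have x: "int L * int m + int K \<in> {0..int E}"
    proof -
      have h: "L * m \<le> L * N" using mm by simp
      have "L * m + K \<le> L * N + L" using h KL by linarith
      also have "L * N + L = E" unfolding E_def by (simp add: algebra_simps)
      finally have "L * m + K \<le> E" .
      then show ?thesis by (simp add: of_nat_mult[symmetric] del: of_nat_mult)
    qed
    show "Z m \<inter> Z m' = {}"
    proof (rule ccontr)
      assume "Z m \<inter> Z m' \<noteq> {}"
      then obtain \<omega> where "\<omega> \<in> Z m" "\<omega> \<in> Z m'" by blast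
      then have "\<omega> (int L * int m + int K) = P m (int L * int m + int K)"
         "\<omega> (int L * int m + int K) = P m' (int L * int m + int K)"
        using x unfolding Z_def cyl_def by auto
      then show False using Pat[of m m] Pat[of m' m] mm by auto
    qed
  qed
  have Zc: "Z = (\<lambda>m. cyl M A 0 (int E) (P m))" by (rule ext) (simp add: Z_def)
  interpret p: prob_space \<mu> by (rule prob)
  have "(\<Sum>m\<in>{..N}. measure \<mu> (Z m)) = measure \<mu> (\<Union>m\<in>{..N}. Z m)"
    by (rule measure_finite_Union[symmetric]) (use disj in \<open>auto simp: Zc\<close>)
  also have "\<dots> \<le> 1" by (rule p.prob_le_1)
  finally have s1: "(\<Sum>m\<in>{..N}. measure \<mu> (Z m)) \<le> 1" .
  have "\<exists>m\<le>N. measure \<mu> (Z m) \<le> q"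
  proof (rule ccontr)
    assume "\<not> ?thesis"
    then have "\<forall>m\<in>{..N}. q < measure \<mu> (Z m)" by auto
    then have "(\<Sum>m\<in>{..N}. q) < (\<Sum>m\<in>{..N}. measure \<mu> (Z m))"
      by (intro sum_strict_mono) auto
    moreover have "(\<Sum>m\<in>{..N}. q) = (real N + 1) * q" by simp
    moreover have "real N \<ge> 1/q" unfolding N_def by linarith
    then have "(real N + 1) * q > 1" using q by (simp add: field_simps)
    ultimately show False using s1 by linarith
  qed
  then show ?thesis using PT unfolding Z_def by blast
qed

end




context setup2
begin

lemma meas_inv: "measure \<mu> (cyl M A (a+t) (b+t) (\<lambda>j. w (j - t))) = measure \<mu> (cyl M A a b w)"
  unfolding measure_def using cyl_inv by simp

lemma small_pos:
  assumes q: "q > 0"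
  shows "\<exists>r\<ge>R. \<exists>\<omega>\<in>TMC M A. 0 < measure \<mu> (cyl M A 0 (2 * int r) \<omega>) \<and> measure \<mu> (cyl M A 0 (2 * int r) \<omega>) \<le> q"
proof -
  interpret p: prob_space \<mu> by (rule prob)
  obtain \<omega> E where om: "\<omega> \<in> TMC M A" and E: "measure \<mu> (cyl M A 0 (int E) \<omega>) \<le> q"
    using small_cyl[OF q] by blast
  define r where "r = max R E"
  have sub: "cyl M A 0 (2 * int r) \<omega> \<subseteq> cyl M A 0 (int E) \<omega>"
    unfolding cyl_def r_def by auto
  have le: "measure \<mu> (cyl M A 0 (2 * int r) \<omega>) \<le> q"
    using p.finite_measure_mono[OF sub cyl_sets] E by linarith
  obtain C P where CP: "C > 0" "\<forall>\<omega>\<in>TMC M A. \<forall>n::nat. n \<ge> 1 \<longrightarrow>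
      exp (- real n * P + birkhoff_sum \<phi> n \<omega>) / C \<le> measure \<mu> (cyl M A 0 (int n - 1) \<omega>)"
    using gb unfolding gibbs_def by blast
  have "exp (- real (2*r+1) * P + birkhoff_sum \<phi> (2*r+1) \<omega>) / C \<le> measure \<mu> (cyl M A 0 (int (2*r+1) - 1) \<omega>)"
    using CP(2) om by (metis le_add2 add.commute)
  moreover have "int (2*r+1) - 1 = 2 * int r" by simp
  moreover have "exp (- real (2*r+1) * P + birkhoff_sum \<phi> (2*r+1) \<omega>) / C > 0" using CP(1) by simp
  ultimately have "0 < measure \<mu> (cyl M A 0 (2 * int r) \<omega>)" by simp
  moreover have "r \<ge> R" unfolding r_def by simp
  ultimately show ?thesis using le om by blast
qed

end




context setup2
begin

lemma construct:
  fixes g :: "nat \<Rightarrow> int" and \<epsilon> :: real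
  assumes eps: "\<epsilon> > 0"
  shows "\<exists>a b :: nat \<Rightarrow> int. \<exists>w :: nat \<Rightarrow> int \<Rightarrow> nat.
    (\<forall>n. \<exists>r k::nat. real k \<le> \<epsilon> * real r \<and> a n = g r + int k \<and> b n = a n + 2 * int r) \<and>
    (\<Sum>n. emeasure \<mu> (cyl M A (a n) (b n) (w n))) = \<infinity> \<and>
    (AE \<omega> in \<mu>. finite {n. (shift ^^ n) \<omega> \<in> cyl M A (a n) (b n) (w n)})"
proof -
  interpret p: prob_space \<mu> by (rule prob)
  define Q where "Q j x \<longleftrightarrow> real (2^(j+1)) \<le> \<epsilon> * real (fst x) \<and> snd x \<in> TMC M A \<and>
     0 < measure \<mu> (cyl M A 0 (2 * int (fst x)) (snd x)) \<and> measure \<mu> (cyl M A 0 (2 * int (fst x)) (snd x)) \<le> (1/2)^(j+1)" for j x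
  have "\<forall>j. \<exists>x. Q j x"
  proof
    fix j :: nat
    have q: "(0::real) < (1/2)^(j+1)" by simp
    obtain r where r1: "r \<ge> nat \<lceil>2^(j+1) / \<epsilon>\<rceil>" and
      "\<exists>\<omega>\<in>TMC M A. 0 < measure \<mu> (cyl M A 0 (2 * int r) \<omega>) \<and> measure \<mu> (cyl M A 0 (2 * int r) \<omega>) \<le> (1/2)^(j+1)"
      using small_pos[OF q, of "nat \<lceil>2^(j+1) / \<epsilon>\<rceil>"] by blast
    then obtain \<omega> where r: "\<omega> \<in> TMC M A"
      "0 < measure \<mu> (cyl M A 0 (2 * int r) \<omega>)" "measure \<mu> (cyl M A 0 (2 * int r) \<omega>) \<le> (1/2)^(j+1)"
      by blast
    have "real r \<ge> 2^(j+1) / \<epsilon>" using r1 by linarith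
    then have "real (2^(j+1)) \<le> \<epsilon> * real r" using eps by (simp add: field_simps)
    then have "Q j (r, \<omega>)" unfolding Q_def using r by simp
    then show "\<exists>x. Q j x" by blast
  qed
  then obtain f where f: "\<And>j. Q j (f j)" using choice by metis
  define rr where "rr j = fst (f j)" for j
  define om where "om j = snd (f j)" for j
  have ro: "\<And>j. real (2^(j+1)) \<le> \<epsilon> * real (rr j)" "\<And>j. om j \<in> TMC M A"
    "\<And>j. 0 < measure \<mu> (cyl M A 0 (2 * int (rr j)) (om j))"
    "\<And>j. measure \<mu> (cyl M A 0 (2 * int (rr j)) (om j)) \<le> (1/2)^(j+1)"
    using f unfolding Q_def rr_def om_def by auto
  define p where "p j = measure \<mu> (cyl M A 0 (2 * int (rr j)) (om j))" for j
  define S where "S j = (2::nat)^(j+1)" for j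
  define m where "m j = nat \<lfloor>(1/2)^j / p j\<rfloor>" for j
  define L where "L j = m j * S j" for j
  define N where "N j = (\<Sum>i<j. L i)" for j
  define J where "J n = (LEAST j. n < N (Suc j))" for n
  have p0: "p j > 0" for j using ro(3) p_def by simp
  have p1: "p j \<le> (1/2)^(j+1)" for j using ro(4) p_def by simp
  have S1: "S j \<ge> 1" for j unfolding S_def by simp
  have mp_le: "real (m j) * p j \<le> (1/2)^j" and mp_ge: "real (m j) * p j \<ge> (1/2)^(j+1)" and m1: "m j \<ge> 1" for j
  proof -
    have q2: "(1/2)^j / p j \<ge> 2" using p0[of j] p1[of j] by (simp add: field_simps)
    have rm: "real (m j) = real_of_int \<lfloor>(1/2)^j / p j\<rfloor>" unfolding m_def using q2 by simp
    have "real (m j) \<le> (1/2)^j / p j" using rm by linarith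
    then show "real (m j) * p j \<le> (1/2)^j" using p0[of j] by (simp add: field_simps)
    have "real (m j) \<ge> (1/2)^j / p j - 1" using rm by linarith
    then have "real (m j) * p j \<ge> ((1/2)^j / p j - 1) * p j" using p0[of j] by (simp add: mult_right_mono)
    also have "((1/2)^j / p j - 1) * p j = (1/2)^j - p j" using p0[of j] by (simp add: field_simps)
    finally show "real (m j) * p j \<ge> (1/2)^(j+1)" using p1[of j] by simp
    show "m j \<ge> 1" using rm q2 by linarith
  qed
  have L1: "L j \<ge> 1" for j unfolding L_def using m1 S1 by simp
  have NS: "N (Suc j) = N j + L j" for j unfolding N_def by simp
  have Nmono: "i \<le> j \<Longrightarrow> N i \<le> N j" for i j unfolding N_def by (rule sum_mono2) auto
  have Nge: "N j \<ge> j" for j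
  proof (induction j)
    case 0 then show ?case by simp
  next
    case (Suc j) then show ?case using NS[of j] L1[of j] by simp
  qed
  have Jex: "n < N (Suc (J n))" for n
    unfolding J_def by (rule LeastI[of _ n]) (use Nge[of "Suc n"] in simp)
  have Jlo: "N (J n) \<le> n" for n
  proof (cases "J n")
    case 0 then show ?thesis by (simp add: N_def)
  next
    case (Suc j')
    then have "\<not> n < N (Suc j')" unfolding J_def by (metis lessI not_less_Least)
    then show ?thesis using Suc by simp
  qed
  have Jeq: "N j \<le> n \<Longrightarrow> n < N (Suc j) \<Longrightarrow> J n = j" for n j
    unfolding J_def
  proof (rule Least_equality)
    fix y assume "N j \<le> n" "n < N (Suc y)"
    show "j \<le> y"
    proof (rule ccontr)
      assume "\<not> j \<le> y"
      then have "Suc y \<le> j" by simp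
      then have "N (Suc y) \<le> N j" by (rule Nmono)
      then show False using \<open>N j \<le> n\<close> \<open>n < N (Suc y)\<close> by simp
    qed
  qed
  define kk where "kk n = S (J n) - 1 - (n - N (J n)) mod S (J n)" for n
  define a where "a n = g (rr (J n)) + int (kk n)" for n
  define b where "b n = a n + 2 * int (rr (J n))" for n
  define w where "w n = (\<lambda>i. om (J n) (i - a n))" for n
  have cond: "\<forall>n. \<exists>r k::nat. real k \<le> \<epsilon> * real r \<and> a n = g r + int k \<and> b n = a n + 2 * int r"
  proof
    fix n
    have "kk n \<le> S (J n)" unfolding kk_def by simp
    then have "real (kk n) \<le> real (S (J n))" by simp
    also have "real (S (J n)) \<le> \<epsilon> * real (rr (J n))" using ro(1)[of "J n"] unfolding S_def .
    finally have "real (kk n) \<le> \<epsilon> * real (rr (J n))" .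
    then show "\<exists>r k::nat. real k \<le> \<epsilon> * real r \<and> a n = g r + int k \<and> b n = a n + 2 * int r"
      unfolding a_def b_def by blast
  qed
  have emC: "emeasure \<mu> (cyl M A (a n) (b n) (w n)) = ennreal (p (J n))" for n
  proof -
    have "emeasure \<mu> (cyl M A (0 + a n) (2 * int (rr (J n)) + a n) (\<lambda>i. om (J n) (i - a n))) = emeasure \<mu> (cyl M A 0 (2 * int (rr (J n))) (om (J n)))"
      by (rule cyl_inv)
    then have "emeasure \<mu> (cyl M A (a n) (b n) (w n)) = emeasure \<mu> (cyl M A 0 (2 * int (rr (J n))) (om (J n)))"
      unfolding b_def w_def by (simp add: add.commute)
    then show ?thesis unfolding p_def by (simp add: p.emeasure_eq_measure)
  qed
  have part: "(\<Sum>n<N j. p (J n)) \<ge> real j" for j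
  proof (induction j)
    case 0 then show ?case by (simp add: N_def)
  next
    case (Suc j)
    have "(\<Sum>n<N (Suc j). p (J n)) = (\<Sum>n<N j. p (J n)) + (\<Sum>n\<in>{N j..<N (Suc j)}. p (J n))"
    proof -
      have "{..<N (Suc j)} = {..<N j} \<union> {N j..<N (Suc j)}" using Nmono[of j "Suc j"] by auto
      moreover have "{..<N j} \<inter> {N j..<N (Suc j)} = {}" by auto
      ultimately show ?thesis by (simp add: sum.union_disjoint)
    qed
    also have "(\<Sum>n\<in>{N j..<N (Suc j)}. p (J n)) = (\<Sum>n\<in>{N j..<N (Suc j)}. p j)"
    proof (rule sum.cong)
      fix x assume "x \<in> {N j..<N (Suc j)}"
      then have "J x = j" using Jeq[of j x] by simp
      then show "p (J x) = p j" by simp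
    qed simp
    also have "\<dots> = real (L j) * p j" using NS by simp
    also have "real (L j) * p j = real (S j) * (real (m j) * p j)" unfolding L_def by simp
    finally have eq: "(\<Sum>n<N (Suc j). p (J n)) = (\<Sum>n<N j. p (J n)) + real (S j) * (real (m j) * p j)" .
    have "real (S j) * (real (m j) * p j) \<ge> real (S j) * (1/2)^(j+1)" using mp_ge[of j] by (intro mult_left_mono) auto
    moreover have "real (S j) * (1/2)^(j+1) = 1"
    proof -
      have "real (S j) * (1/2)^(j+1) = (2 * (1/2::real))^(j+1)" unfolding S_def power_mult_distrib by simp
      then show ?thesis by simp
    qed
    ultimately show ?case using Suc.IH eq by simp
  qed
  have nsum: "\<not> summable (\<lambda>n. p (J n))"
  proof
    assume s: "summable (\<lambda>n. p (J n))"
    obtain j :: nat where "real j > suminf (\<lambda>n. p (J n))" using reals_Archimedean2 by blast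
    moreover have "(\<Sum>n<N j. p (J n)) \<le> suminf (\<lambda>n. p (J n))"
    proof (rule sum_le_suminf[OF s])
      fix n show "0 \<le> p (J n)" using p0[of "J n"] by simp
    qed simp
    ultimately show False using part[of j] by linarith
  qed
  have sumtop: "(\<Sum>n. emeasure \<mu> (cyl M A (a n) (b n) (w n))) = \<infinity>"
  proof -
    have "(\<Sum>n. ennreal (p (J n))) = \<infinity>"
    proof (rule ccontr)
      assume "(\<Sum>n. ennreal (p (J n))) \<noteq> \<infinity>"
      then have nt: "(\<Sum>n. ennreal (p (J n))) \<noteq> top" by simp
      have nn: "\<And>n. 0 \<le> p (J n)" using p0 less_imp_le by blast
      have "summable (\<lambda>n. p (J n))" by (rule summable_suminf_not_top[of "\<lambda>n. p (J n)", OF nn nt])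
      then show False using nsum by simp
    qed
    then show ?thesis using emC by simp
  qed
  define c where "c j i = g (rr j) + int (S j - 1) + int (N j) + int (S j * i)" for j i
  define U where "U j = (\<Union>i<m j. cyl M A (c j i) (c j i + 2 * int (rr j)) (\<lambda>x. om j (x - c j i)))" for j
  have Usets: "U j \<in> sets \<mu>" for j unfolding U_def by (intro sets.finite_UN) auto
  have Ule: "measure \<mu> (U j) \<le> (1/2)^j" for j
  proof -
    have "measure \<mu> (U j) \<le> (\<Sum>i<m j. measure \<mu> (cyl M A (c j i) (c j i + 2 * int (rr j)) (\<lambda>x. om j (x - c j i))))"
      unfolding U_def by (rule measure_UNION_le) (simp, rule cyl_sets)
    also have "\<dots> = (\<Sum>i<m j. p j)"
    proof (rule sum.cong)
      fix i
      show "measure \<mu> (cyl M A (c j i) (c j i + 2 * int (rr j)) (\<lambda>x. om j (x - c j i))) = p j"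
        using meas_inv[of 0 "c j i" "2 * int (rr j)" "om j"] unfolding p_def by (simp add: add.commute)
    qed simp
    also have "\<dots> = real (m j) * p j" by simp
    finally show ?thesis using mp_le[of j] by linarith
  qed
  have Usum: "summable (\<lambda>j. measure \<mu> (U j))"
  proof (rule summable_comparison_test'[where g="\<lambda>j. (1/2::real)^j" and N=0])
    show "summable (\<lambda>j. (1/2::real)^j)" by (rule summable_geometric) simp
    fix j show "norm (measure \<mu> (U j)) \<le> (1/2)^j" using Ule[of j] by simp
  qed
  have AEU: "AE \<omega> in \<mu>. eventually (\<lambda>j. \<omega> \<in> space \<mu> - U j) sequentially"
    by (rule borel_cantelli_AE1[OF Usets _ Usum]) (simp add: p.emeasure_eq_measure)
  have hitU: "\<omega> \<in> U (J n)" if h: "(shift ^^ n) \<omega> \<in> cyl M A (a n) (b n) (w n)" for \<omega> n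
  proof -
    let ?j = "J n"
    define t where "t = n - N ?j"
    have tL: "t < m ?j * S ?j" using Jex[of n] Jlo[of n] NS unfolding t_def L_def by simp
    define i where "i = t div S ?j"
    have im: "i < m ?j" unfolding i_def using tL by (simp add: less_mult_imp_div_less)
    have modS: "t mod S ?j < S ?j" using S1 by (simp add: less_Suc_eq_le Suc_le_eq)
    have tdec: "t = S ?j * i + t mod S ?j" unfolding i_def by simp
    have kkn: "kk n = S ?j - 1 - t mod S ?j" unfolding kk_def t_def by simp
    have "int (kk n) + int n = int (S ?j - 1) + int (N ?j) + int (S ?j * i)"
    proof -
      have "kk n + n = (S ?j - 1) + N ?j + S ?j * i"
      proof -
        have n_eq: "n = N ?j + S ?j * i + t mod S ?j" using tdec Jlo[of n] unfolding t_def by simp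
        have r_le: "t mod S ?j \<le> S ?j - 1" using modS by simp
        show ?thesis using kkn n_eq r_le by arith
      qed
      then show ?thesis by (metis of_nat_add)
    qed
    then have cn: "c ?j i = a n + int n" unfolding c_def a_def by simp
    have "\<omega> \<in> cyl M A (a n + int n) (b n + int n) (\<lambda>x. w n (x - int n))"
      using hit_iff[THEN iffD1, OF h] .
    also have "cyl M A (a n + int n) (b n + int n) (\<lambda>x. w n (x - int n)) =
       cyl M A (c ?j i) (c ?j i + 2 * int (rr ?j)) (\<lambda>x. om ?j (x - c ?j i))"
    proof -
      have e1: "b n + int n = c ?j i + 2 * int (rr ?j)" unfolding b_def cn by simp
      have e2: "(\<lambda>x. w n (x - int n)) = (\<lambda>x. om ?j (x - c ?j i))"
      proof
        fix x
        have eq: "x - int n - a n = x - c ?j i" unfolding cn by simp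
        have "w n (x - int n) = om ?j (x - int n - a n)" unfolding w_def by simp
        also have "\<dots> = om ?j (x - c ?j i)" using eq by (rule arg_cong)
        finally show "w n (x - int n) = om ?j (x - c ?j i)" .
      qed
      show ?thesis unfolding e1 e2 cn ..
    qed
    finally have "\<omega> \<in> cyl M A (c ?j i) (c ?j i + 2 * int (rr ?j)) (\<lambda>x. om ?j (x - c ?j i))" .
    then show ?thesis unfolding U_def by (rule UN_I[of i, rotated]) (use im in simp)
  qed
  have AEfin: "AE \<omega> in \<mu>. finite {n. (shift ^^ n) \<omega> \<in> cyl M A (a n) (b n) (w n)}"
    using AEU
  proof (rule AE_mp, intro AE_I2 impI)
    fix \<omega> assume "eventually (\<lambda>j. \<omega> \<in> space \<mu> - U j) sequentially"
    then obtain J0 where J0: "\<And>j. j \<ge> J0 \<Longrightarrow> \<omega> \<notin> U j" unfolding eventually_sequentially by auto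
    have "{n. (shift ^^ n) \<omega> \<in> cyl M A (a n) (b n) (w n)} \<subseteq> {..<N J0}"
    proof
      fix n assume "n \<in> {n. (shift ^^ n) \<omega> \<in> cyl M A (a n) (b n) (w n)}"
      then have "\<omega> \<in> U (J n)" using hitU by blast
      then have "J n < J0" using J0 not_le by blast
      then have "N (Suc (J n)) \<le> N J0" using Nmono by simp
      then show "n \<in> {..<N J0}" using Jex[of n] by simp
    qed
    then show "finite {n. (shift ^^ n) \<omega> \<in> cyl M A (a n) (b n) (w n)}" using finite_subset by blast
  qed
  show ?thesis using cond sumtop AEfin by blast
qed

end




theorem theorem2p3:
  fixes M K :: nat and A :: "nat \<Rightarrow> nat \<Rightarrow> nat" and \<phi> :: "(int \<Rightarrow> nat) \<Rightarrow> real"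
    and \<mu> :: "(int \<Rightarrow> nat) measure" and \<epsilon> :: real
  assumes "M \<ge> 2" and "zero_one_matrix M A"
    and "K \<ge> 1" and "\<forall>i\<in>{1..M}. \<forall>j\<in>{1..M}. mat_pow M A K i j > 0"
    and "holder M A \<phi>"
    and "prob_space \<mu>" and "sets \<mu> = sets borel" and "emeasure \<mu> (TMC M A) = 1"
    and "shift \<in> measurable \<mu> \<mu>" and "distr \<mu> \<mu> shift = \<mu>"
    and "gibbs M A \<phi> \<mu>"
    and "\<epsilon> > 0"
  shows
    "(\<exists>a b :: nat \<Rightarrow> int. \<exists>w :: nat \<Rightarrow> int \<Rightarrow> nat.
        (\<forall>n. a n \<le> b n) \<and>
        (\<Sum>n. emeasure \<mu> (cyl M A (a n) (b n) (w n))) = \<infinity> \<and>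
        (\<forall>n. \<bar>real_of_int (a n + b n) / 2\<bar> \<le> \<epsilon> * real_of_int (b n - a n + 1) / 2) \<and>
        (AE \<omega> in \<mu>. finite {n. (shift ^^ n) \<omega> \<in> cyl M A (a n) (b n) (w n)}))
   \<and> (\<exists>a b :: nat \<Rightarrow> int. \<exists>w :: nat \<Rightarrow> int \<Rightarrow> nat.
        (\<forall>n. a n \<le> b n) \<and>
        (\<Sum>n. emeasure \<mu> (cyl M A (a n) (b n) (w n))) = \<infinity> \<and>
        (\<forall>n. 0 \<le> a n \<and> real_of_int (a n) \<le> \<epsilon> * real_of_int (b n - a n + 1)) \<and>
        (AE \<omega> in \<mu>. finite {n. (shift ^^ n) \<omega> \<in> cyl M A (a n) (b n) (w n)}))"
proof -
  interpret s: setup2 M A \<mu> K \<phi>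
    by (intro setup2.intro inv_setup.intro setup2_axioms.intro) (fact assms)+
  have eps: "\<epsilon> > 0" by (rule assms(12))
  obtain a b w where
    c1: "\<forall>n. \<exists>r k::nat. real k \<le> \<epsilon> * real r \<and> a n = - int r + int k \<and> b n = a n + 2 * int r"
    and s1: "(\<Sum>n. emeasure \<mu> (cyl M A (a n) (b n) (w n))) = \<infinity>"
    and f1: "AE \<omega> in \<mu>. finite {n. (shift ^^ n) \<omega> \<in> cyl M A (a n) (b n) (w n)}"
    using s.construct[OF eps, of "\<lambda>r. - int r"] by blast
  obtain a' b' w' where
    c2: "\<forall>n. \<exists>r k::nat. real k \<le> \<epsilon> * real r \<and> a' n = 0 + int k \<and> b' n = a' n + 2 * int r"
    and s2: "(\<Sum>n. emeasure \<mu> (cyl M A (a' n) (b' n) (w' n))) = \<infinity>"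
    and f2: "AE \<omega> in \<mu>. finite {n. (shift ^^ n) \<omega> \<in> cyl M A (a' n) (b' n) (w' n)}"
    using s.construct[OF eps, of "\<lambda>r. 0"] by blast
  have P1: "(\<forall>n. a n \<le> b n) \<and> (\<forall>n. \<bar>real_of_int (a n + b n) / 2\<bar> \<le> \<epsilon> * real_of_int (b n - a n + 1) / 2)"
  proof (intro conjI allI)
    fix n
    obtain r k :: nat where rk: "real k \<le> \<epsilon> * real r" "a n = - int r + int k" "b n = a n + 2 * int r"
      using c1 by blast
    show "a n \<le> b n" using rk by simp
    have "a n + b n = 2 * int k" using rk by simp
    then have "\<bar>real_of_int (a n + b n) / 2\<bar> = real k" by simp
    also have "\<dots> \<le> \<epsilon> * real r" by (rule rk(1))
    also have "\<epsilon> * real r \<le> \<epsilon> * (2 * real r + 1) / 2" using eps by (simp add: field_simps)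
    also have "2 * real r + 1 = real_of_int (b n - a n + 1)" using rk by simp
    finally show "\<bar>real_of_int (a n + b n) / 2\<bar> \<le> \<epsilon> * real_of_int (b n - a n + 1) / 2" .
  qed
  have P2: "(\<forall>n. a' n \<le> b' n) \<and> (\<forall>n. 0 \<le> a' n \<and> real_of_int (a' n) \<le> \<epsilon> * real_of_int (b' n - a' n + 1))"
  proof (intro conjI allI)
    fix n
    obtain r k :: nat where rk: "real k \<le> \<epsilon> * real r" "a' n = 0 + int k" "b' n = a' n + 2 * int r"
      using c2 by blast
    show "a' n \<le> b' n" using rk by simp
    show "0 \<le> a' n" using rk by simp
    have "real_of_int (a' n) = real k" using rk by simp
    also have "\<dots> \<le> \<epsilon> * real r" by (rule rk(1))
    also have "\<epsilon> * real r \<le> \<epsilon> * (2 * real r + 1)" using eps by (simp add: field_simps)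
    also have "2 * real r + 1 = real_of_int (b' n - a' n + 1)" using rk by simp
    finally show "real_of_int (a' n) \<le> \<epsilon> * real_of_int (b' n - a' n + 1)" .
  qed
  have A1: "\<forall>n. a n \<le> b n" and A2: "\<forall>n. \<bar>real_of_int (a n + b n) / 2\<bar> \<le> \<epsilon> * real_of_int (b n - a n + 1) / 2"
    using P1 by (rule conjunct1, rule conjunct2)
  have B1: "\<forall>n. a' n \<le> b' n" and B2: "\<forall>n. 0 \<le> a' n \<and> real_of_int (a' n) \<le> \<epsilon> * real_of_int (b' n - a' n + 1)"
    using P2 by (rule conjunct1, rule conjunct2)
  show ?thesis
    by (intro conjI exI[of _ a] exI[of _ b] exI[of _ w] exI[of _ a'] exI[of _ b'] exI[of _ w'] A1 A2 s1 f1 B1 B2 s2 f2)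
qed



end
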